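(* Let $m\ge 4$ and $n\ge 5$ be integers with $n$ even. On an $m\times n$ board with White king on $(m,1)$, White rook on $(1,1)$, Black king on $(m,n)$, and White to move, White can force checkmate within $n+1$ moves.
   Context: The board is the set of squares $(x,y)$ with $1\le x\le m$ (column) and $1\le y\le n$ (row). The pieces move and capture as in ordinary chess, restricted to this rectangular board: a king moves to any of the up to eight adjacent squares, and a rook moves any number of squares along its row or column without passing through another piece. The usual legality rules apply: a king may not move to a square attacked by an enemy piece, and the kings may never be adjacent. Black is checkmated if the Black king is attacked and Black has no legal move. "White can force checkmate within $k$ moves" means White has a strategy such that, against every sequence of legal Black replies, Black is checkmated by one of White's first $k$ moves; the players alternate, White first. *)

theory Defs
  imports Main
begin

type_synonym sq = "int \<times> int"

text \<open>Square (x,y): x = column, y = row; the board is 1..m by 1..n.\<close>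
definition on_board :: "nat \<Rightarrow> nat \<Rightarrow> sq \<Rightarrow> bool" where
  "on_board m n s \<longleftrightarrow> 1 \<le> fst s \<and> fst s \<le> int m \<and> 1 \<le> snd s \<and> snd s \<le> int n"

definition king_adj :: "sq \<Rightarrow> sq \<Rightarrow> bool" where
  "king_adj p q \<longleftrightarrow> p \<noteq> q \<and> \<bar>fst p - fst q\<bar> \<le> 1 \<and> \<bar>snd p - snd q\<bar> \<le> 1"

definition strictly_between :: "sq \<Rightarrow> sq \<Rightarrow> sq \<Rightarrow> bool" where
  "strictly_between p q t \<longleftrightarrow>
     (fst p = fst q \<and> fst t = fst p \<and> min (snd p) (snd q) < snd t \<and> snd t < max (snd p) (snd q)) \<or>
     (snd p = snd q \<and> snd t = snd p \<and> min (fst p) (fst q) < fst t \<and> fst t < max (fst p) (fst q))"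

definition rook_attacks :: "sq set \<Rightarrow> sq \<Rightarrow> sq \<Rightarrow> bool" where
  "rook_attacks B r s \<longleftrightarrow> r \<noteq> s \<and> (fst r = fst s \<or> snd r = snd s) \<and> (\<forall>t\<in>B. \<not> strictly_between r s t)"

text \<open>Position: White king, White rook (None once captured), Black king.\<close>
record pos =
  wk :: sq
  wr :: "sq option"
  bk :: sq

definition white_moves :: "nat \<Rightarrow> nat \<Rightarrow> pos \<Rightarrow> pos set" where
  "white_moves m n P =
     {P\<lparr>wk := k\<rparr> | k. on_board m n k \<and> king_adj (wk P) k \<and> wr P \<noteq> Some k \<and> k \<noteq> bk P
                       \<and> \<not> king_adj k (bk P)}
   \<union> {P\<lparr>wr := Some r'\<rparr> | r r'. wr P = Some r \<and> on_board m n r' \<and> rook_attacks {wk P, bk P} r r'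
                       \<and> r' \<noteq> wk P \<and> r' \<noteq> bk P \<and> \<not> king_adj (wk P) (bk P)}"

definition black_in_check :: "pos \<Rightarrow> bool" where
  "black_in_check P = (case wr P of None \<Rightarrow> False | Some r \<Rightarrow> rook_attacks {wk P} r (bk P))"

definition black_moves :: "nat \<Rightarrow> nat \<Rightarrow> pos \<Rightarrow> pos set" where
  "black_moves m n P =
     {P\<lparr>bk := k, wr := (if wr P = Some k then None else wr P)\<rparr> | k.
        on_board m n k \<and> king_adj (bk P) k \<and> k \<noteq> wk P \<and> \<not> king_adj (wk P) k \<and>
        (case wr P of None \<Rightarrow> True | Some r \<Rightarrow> r = k \<or> \<not> rook_attacks {wk P} r k)}"

definition checkmated :: "nat \<Rightarrow> nat \<Rightarrow> pos \<Rightarrow> bool" where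
  "checkmated m n P \<longleftrightarrow> black_in_check P \<and> black_moves m n P = {}"

fun forced_mate :: "nat \<Rightarrow> nat \<Rightarrow> nat \<Rightarrow> pos \<Rightarrow> bool" where
  "forced_mate m n 0 P = False"
| "forced_mate m n (Suc k) P =
     (\<exists>P'\<in>white_moves m n P. checkmated m n P' \<or>
        (black_moves m n P' \<noteq> {} \<and> (\<forall>P''\<in>black_moves m n P'. forced_mate m n k P'')))"

end

theory Submission
  imports Defs
begin

definition cpos :: "nat \<Rightarrow> int \<Rightarrow> int \<Rightarrow> int \<Rightarrow> pos" where
  "cpos m y b r = \<lparr>wk = (int m, y), wr = Some (int m - 1, r), bk = (int m, b)\<rparr>"

lemmas defs = on_board_def king_adj_def strictly_between_def rook_attacks_def

lemma bm_col:
  assumes "1 \<le> r" "r + 2 \<le> b" "y + 2 \<le> b" "b \<le> int n" "1 \<le> y" "2 \<le> m"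
  shows "Q \<in> black_moves m n (cpos m y b r) \<longleftrightarrow>
    (Q = cpos m y (b+1) r \<and> b+1 \<le> int n) \<or> (Q = cpos m y (b-1) r \<and> y+3 \<le> b)"
proof
  assume "Q \<in> black_moves m n (cpos m y b r)"
  then obtain a c where Q: "Q = (cpos m y b r)\<lparr>bk := (a,c), wr := (if wr (cpos m y b r) = Some (a,c) then None else wr (cpos m y b r))\<rparr>"
    and h: "on_board m n (a,c)" "king_adj (int m, b) (a,c)" "(a,c) \<noteq> (int m, y)" "\<not> king_adj (int m, y) (a,c)"
      "(a,c) = (int m - 1, r) \<or> \<not> rook_attacks {(int m, y)} (int m - 1, r) (a,c)"
    unfolding black_moves_def cpos_def by auto
  show "(Q = cpos m y (b+1) r \<and> b+1 \<le> int n) \<or> (Q = cpos m y (b-1) r \<and> y+3 \<le> b)"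
  proof -
    have ha: "a = int m - 1 \<or> a = int m" using h(1,2) unfolding defs by auto
    have hc: "c = b - 1 \<or> c = b \<or> c = b + 1" using h(2) unfolding defs by auto
    have "a \<noteq> int m - 1"
    proof
      assume a: "a = int m - 1"
      have "(a,c) \<noteq> (int m - 1, r)" using hc assms a by auto
      moreover have "rook_attacks {(int m, y)} (int m - 1, r) (a,c)"
        using hc assms a unfolding defs by auto
      ultimately show False using h(5) by auto
    qed
    then have a: "a = int m" using ha by auto
    then have "c \<noteq> b" using h(2) unfolding defs by auto
    then consider "c = b - 1" | "c = b + 1" using hc by auto
    then show ?thesis
    proof cases
      case 1
      then have "y + 3 \<le> b" using h(4) a assms unfolding defs by auto
      then show ?thesis using 1 a unfolding Q cpos_def by auto
    next
      case 2
      then have "b + 1 \<le> int n" using h(1) a unfolding defs by auto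
      then show ?thesis using 2 a unfolding Q cpos_def by auto
    qed
  qed
next
  assume "(Q = cpos m y (b+1) r \<and> b+1 \<le> int n) \<or> (Q = cpos m y (b-1) r \<and> y+3 \<le> b)"
  then show "Q \<in> black_moves m n (cpos m y b r)"
  proof
    assume h: "Q = cpos m y (b+1) r \<and> b+1 \<le> int n"
    show ?thesis unfolding black_moves_def
      apply (rule CollectI)
      apply (rule exI[of _ "(int m, b+1)"])
      using h assms by (auto simp: cpos_def defs)
  next
    assume h: "Q = cpos m y (b-1) r \<and> y+3 \<le> b"
    show ?thesis unfolding black_moves_def
      apply (rule CollectI)
      apply (rule exI[of _ "(int m, b - 1)"])
      using h assms by (auto simp: cpos_def defs)
  qed
qed


lemma fm_step:
  assumes "P' \<in> white_moves m n P" "Q0 \<in> black_moves m n P'"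
    "\<And>Q. Q \<in> black_moves m n P' \<Longrightarrow> forced_mate m n k Q"
  shows "forced_mate m n (Suc k) P"
  using assms by (auto intro!: bexI[of _ P'])

lemma fm_mate:
  assumes "P' \<in> white_moves m n P" "checkmated m n P'"
  shows "forced_mate m n (Suc k) P"
  using assms by (auto intro!: bexI[of _ P'])

lemma adj_cases:
  assumes "king_adj (p, q) (a, c)"
  shows "(a = p - 1 \<or> a = p \<or> a = p + 1) \<and> (c = q - 1 \<or> c = q \<or> c = q + 1)"
  using assms unfolding king_adj_def by auto

lemma wm_climb:
  assumes "y + 3 \<le> b" "1 \<le> y" "b \<le> int n" "2 \<le> m"
  shows "cpos m (y+1) b r \<in> white_moves m n (cpos m y b r)"
  unfolding white_moves_def
  apply (rule UnI1)
  apply (rule CollectI)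
  apply (rule exI[of _ "(int m, y+1)"])
  using assms by (auto simp: cpos_def defs)

lemma wm_wait:
  assumes "y + 2 \<le> b" "1 \<le> y" "b \<le> int n" "2 \<le> m"
  shows "cpos m y b 2 \<in> white_moves m n (cpos m y b 1)"
  unfolding white_moves_def
  apply (rule UnI2)
  apply (rule CollectI)
  apply (rule exI[of _ "(int m - 1, 1)"])
  apply (rule exI[of _ "(int m - 1, 2)"])
  using assms by (auto simp: cpos_def defs)

lemma final3:
  assumes "4 \<le> m" "6 \<le> n" "1 \<le> r" "r \<le> 2"
  shows "forced_mate m n 3 (cpos m (int n - 3) (int n) r)"
proof -
  define F1 where "F1 = \<lparr>wk = (int m - 1, int n - 2), wr = Some (int m - 1, r), bk = (int m, int n)\<rparr>"
  define F2 where "F2 = \<lparr>wk = (int m - 1, int n - 2), wr = Some (int m - 1, r), bk = (int m - 1, int n)\<rparr>"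
  define F3 where "F3 = \<lparr>wk = (int m - 1, int n - 2), wr = Some (int m - 2, r), bk = (int m - 1, int n)\<rparr>"
  define F4 where "F4 = \<lparr>wk = (int m - 1, int n - 2), wr = Some (int m - 2, r), bk = (int m, int n)\<rparr>"
  define F5 where "F5 = \<lparr>wk = (int m - 1, int n - 2), wr = Some (int m - 2, int n), bk = (int m, int n)\<rparr>"
  have w1: "F1 \<in> white_moves m n (cpos m (int n - 3) (int n) r)"
    unfolding white_moves_def
    apply (rule UnI1)
    apply (rule CollectI)
    apply (rule exI[of _ "(int m - 1, int n - 2)"])
    using assms by (auto simp: cpos_def defs F1_def)
  have b1: "Q \<in> black_moves m n F1 \<longleftrightarrow> Q = F2" for Q
  proof
    assume "Q \<in> black_moves m n F1"
    then obtain a c where Q: "Q = F1\<lparr>bk := (a,c), wr := (if wr F1 = Some (a,c) then None else wr F1)\<rparr>"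
      and h: "on_board m n (a,c)" "king_adj (int m, int n) (a,c)" "(a,c) \<noteq> wk F1" "\<not> king_adj (wk F1) (a,c)"
        "(a,c) = (int m - 1, r) \<or> \<not> rook_attacks {wk F1} (int m - 1, r) (a,c)"
      unfolding black_moves_def F1_def by auto
    have "a \<le> int m" "c \<le> int n" using h(1) unfolding defs by auto
    then have "(a = int m - 1 \<or> a = int m) \<and> (c = int n - 1 \<or> c = int n)" using adj_cases[OF h(2)] by auto
    then show "Q = F2" using h assms unfolding Q by (elim conjE disjE) (auto simp: F1_def F2_def defs)
  next
    assume "Q = F2"
    then show "Q \<in> black_moves m n F1" unfolding black_moves_def
      apply -
      apply (rule CollectI)
      apply (rule exI[of _ "(int m - 1, int n)"])
      using assms by (auto simp: F1_def F2_def defs)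
  qed
  have w2: "F3 \<in> white_moves m n F2"
    unfolding white_moves_def
    apply (rule UnI2)
    apply (rule CollectI)
    apply (rule exI[of _ "(int m - 1, r)"])
    apply (rule exI[of _ "(int m - 2, r)"])
    using assms by (auto simp: F2_def F3_def defs)
  have b2: "Q \<in> black_moves m n F3 \<longleftrightarrow> Q = F4" for Q
  proof
    assume "Q \<in> black_moves m n F3"
    then obtain a c where Q: "Q = F3\<lparr>bk := (a,c), wr := (if wr F3 = Some (a,c) then None else wr F3)\<rparr>"
      and h: "on_board m n (a,c)" "king_adj (int m - 1, int n) (a,c)" "(a,c) \<noteq> wk F3" "\<not> king_adj (wk F3) (a,c)"
        "(a,c) = (int m - 2, r) \<or> \<not> rook_attacks {wk F3} (int m - 2, r) (a,c)"
      unfolding black_moves_def F3_def by auto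
    have "a \<le> int m" "c \<le> int n" using h(1) unfolding defs by auto
    then have "(a = int m - 2 \<or> a = int m - 1 \<or> a = int m) \<and> (c = int n - 1 \<or> c = int n)" using adj_cases[OF h(2)] by auto
    then show "Q = F4" using h assms unfolding Q by (elim conjE disjE) (auto simp: F3_def F4_def defs)
  next
    assume "Q = F4"
    then show "Q \<in> black_moves m n F3" unfolding black_moves_def
      apply -
      apply (rule CollectI)
      apply (rule exI[of _ "(int m, int n)"])
      using assms by (auto simp: F3_def F4_def defs)
  qed
  have w3: "F5 \<in> white_moves m n F4"
    unfolding white_moves_def
    apply (rule UnI2)
    apply (rule CollectI)
    apply (rule exI[of _ "(int m - 2, r)"])
    apply (rule exI[of _ "(int m - 2, int n)"])
    using assms by (auto simp: F4_def F5_def defs)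
  have mate: "checkmated m n F5"
  proof -
    have "black_in_check F5" using assms by (auto simp: F5_def black_in_check_def defs)
    moreover have "Q \<notin> black_moves m n F5" for Q
    proof
      assume "Q \<in> black_moves m n F5"
      then obtain a c where
        h: "on_board m n (a,c)" "king_adj (int m, int n) (a,c)" "(a,c) \<noteq> wk F5" "\<not> king_adj (wk F5) (a,c)"
          "(a,c) = (int m - 2, int n) \<or> \<not> rook_attacks {wk F5} (int m - 2, int n) (a,c)"
        unfolding black_moves_def F5_def by auto
      have "a \<le> int m" "c \<le> int n" using h(1) unfolding defs by auto
      then have "(a = int m - 1 \<or> a = int m) \<and> (c = int n - 1 \<or> c = int n)" using adj_cases[OF h(2)] by auto
      then show False using h assms by (elim conjE disjE) (auto simp: F5_def defs)
    qed
    ultimately show ?thesis unfolding checkmated_def by auto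
  qed
  have "forced_mate m n (Suc 0) F4" using fm_mate[OF w3 mate] .
  then have "forced_mate m n (Suc (Suc 0)) F2"
    by (intro fm_step[OF w2, of F4]) (simp_all add: b2)
  then have "forced_mate m n (Suc (Suc (Suc 0))) (cpos m (int n - 3) (int n) r)"
    by (intro fm_step[OF w1, of F2]) (simp_all add: b1)
  then show ?thesis by (simp add: numeral_eq_Suc)
qed


lemma claimA:
  assumes m: "4 \<le> m" and n: "6 \<le> n" and r: "1 \<le> r" "r \<le> 2"
  shows "\<forall>y b. int n - y = int j \<longrightarrow> odd (b - y) \<longrightarrow> y + 3 \<le> b \<longrightarrow> b \<le> int n
           \<longrightarrow> r \<le> y \<longrightarrow> forced_mate m n j (cpos m y b r)"
proof (induction j)
  case 0
  then show ?case by auto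
next
  case (Suc j)
  show ?case
  proof (intro allI impI)
    fix y b
    assume h: "int n - y = int (Suc j)" "odd (b - y)" "y + 3 \<le> b" "b \<le> int n" "r \<le> y"
    show "forced_mate m n (Suc j) (cpos m y b r)"
    proof (cases "y = int n - 3")
      case True
      then have "b = int n" using h by presburger
      moreover have "Suc j = 3" using h True by auto
      ultimately show ?thesis using final3[OF m n r] True by simp
    next
      case False
      then have y4: "y + 4 \<le> int n" using h by presburger
      have bm: "Q \<in> black_moves m n (cpos m (y+1) b r) \<longleftrightarrow>
          (Q = cpos m (y+1) (b+1) r \<and> b+1 \<le> int n) \<or> (Q = cpos m (y+1) (b-1) r \<and> (y+1)+3 \<le> b)" for Q
        by (rule bm_col) (use h r m in auto)
      show ?thesis
      proof (rule fm_step[OF wm_climb])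
        show "y + 3 \<le> b" "1 \<le> y" "b \<le> int n" "2 \<le> m" using h r m by auto
        show "(if b < int n then cpos m (y+1) (b+1) r else cpos m (y+1) (b-1) r) \<in> black_moves m n (cpos m (y+1) b r)"
          unfolding bm using h y4 by (cases "b < int n") auto
        fix Q assume "Q \<in> black_moves m n (cpos m (y+1) b r)"
        then have "(Q = cpos m (y+1) (b+1) r \<and> b+1 \<le> int n) \<or> (Q = cpos m (y+1) (b-1) r \<and> (y+1)+3 \<le> b)"
          using bm by blast
        then show "forced_mate m n j Q"
        proof
          assume q: "Q = cpos m (y+1) (b+1) r \<and> b+1 \<le> int n"
          show ?thesis using Suc.IH q h by (auto simp: algebra_simps)
        next
          assume q: "Q = cpos m (y+1) (b-1) r \<and> (y+1)+3 \<le> b"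
          have "y + 4 \<le> b" using q by simp
          then have "y + 5 \<le> b" using h(2) by presburger
          then show ?thesis using Suc.IH q h by (auto simp: algebra_simps)
        qed
      qed
    qed
  qed
qed


lemma claimB:
  assumes m: "4 \<le> m" and n: "6 \<le> n"
  shows "\<forall>y b. int n - y + 1 = int j \<longrightarrow> even (b - y) \<longrightarrow> y + 2 \<le> b \<longrightarrow> b \<le> int n
           \<longrightarrow> 1 \<le> y \<longrightarrow> (b = y + 2 \<longrightarrow> 2 \<le> y \<and> b < int n)
           \<longrightarrow> forced_mate m n j (cpos m y b 1)"
proof (induction j)
  case 0
  then show ?case by auto
next
  case (Suc j)
  show ?case
  proof (intro allI impI)
    fix y b
    assume h: "int n - y + 1 = int (Suc j)" "even (b - y)" "y + 2 \<le> b" "b \<le> int n" "1 \<le> y"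
      "b = y + 2 \<longrightarrow> 2 \<le> y \<and> b < int n"
    show "forced_mate m n (Suc j) (cpos m y b 1)"
    proof (cases "b = y + 2")
      case True
      have bm: "Q \<in> black_moves m n (cpos m y b 2) \<longleftrightarrow>
          (Q = cpos m y (b+1) 2 \<and> b+1 \<le> int n) \<or> (Q = cpos m y (b-1) 2 \<and> y+3 \<le> b)" for Q
        by (rule bm_col) (use h True m in auto)
      have A: "forced_mate m n j (cpos m y (b+1) 2)"
        using claimA[OF m n, of 2 j] h True by auto
      show ?thesis
      proof (rule fm_step[OF wm_wait])
        show "y + 2 \<le> b" "1 \<le> y" "b \<le> int n" "2 \<le> m" using h m by auto
        show "cpos m y (b+1) 2 \<in> black_moves m n (cpos m y b 2)"
          unfolding bm using h True by auto
        fix Q assume "Q \<in> black_moves m n (cpos m y b 2)"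
        then have "Q = cpos m y (b+1) 2" using bm True by auto
        then show "forced_mate m n j Q" using A by simp
      qed
    next
      case False
      then have b4: "y + 4 \<le> b" using h(2,3) by presburger
      have bm: "Q \<in> black_moves m n (cpos m (y+1) b 1) \<longleftrightarrow>
          (Q = cpos m (y+1) (b+1) 1 \<and> b+1 \<le> int n) \<or> (Q = cpos m (y+1) (b-1) 1 \<and> (y+1)+3 \<le> b)" for Q
        by (rule bm_col) (use h b4 m in auto)
      show ?thesis
      proof (rule fm_step[OF wm_climb])
        show "y + 3 \<le> b" "1 \<le> y" "b \<le> int n" "2 \<le> m" using h b4 m by auto
        show "cpos m (y+1) (b-1) 1 \<in> black_moves m n (cpos m (y+1) b 1)"
          unfolding bm using b4 by auto
        fix Q assume "Q \<in> black_moves m n (cpos m (y+1) b 1)"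
        then have "(Q = cpos m (y+1) (b+1) 1 \<and> b+1 \<le> int n) \<or> (Q = cpos m (y+1) (b-1) 1 \<and> (y+1)+3 \<le> b)"
          using bm by blast
        then show "forced_mate m n j Q"
        proof
          assume q: "Q = cpos m (y+1) (b+1) 1 \<and> b+1 \<le> int n"
          have "even (b + 1 - (y + 1))" using h(2) by simp
          then show ?thesis using Suc.IH q h b4 by (auto simp: algebra_simps)
        next
          assume q: "Q = cpos m (y+1) (b-1) 1 \<and> (y+1)+3 \<le> b"
          have "even (b - 1 - (y + 1))" using h(2) by presburger
          then show ?thesis using Suc.IH q h b4 by (auto simp: algebra_simps)
        qed
      qed
    qed
  qed
qed

theorem lemma2:
  fixes m n :: nat
  assumes "m \<ge> 4" and "n \<ge> 5" and "even n"
  shows "forced_mate m n (n + 1)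
           \<lparr>wk = (int m, 1), wr = Some (1, 1), bk = (int m, int n)\<rparr>"
proof -
  have m: "4 \<le> m" using assms by simp
  have n: "6 \<le> n" using assms by presburger
  have w: "cpos m 1 (int n) 1 \<in> white_moves m n \<lparr>wk = (int m, 1), wr = Some (1, 1), bk = (int m, int n)\<rparr>"
    unfolding white_moves_def
    apply (rule UnI2)
    apply (rule CollectI)
    apply (rule exI[of _ "(1, 1)"])
    apply (rule exI[of _ "(int m - 1, 1)"])
    using m n by (auto simp: cpos_def defs)
  have bm: "Q \<in> black_moves m n (cpos m 1 (int n) 1) \<longleftrightarrow>
      (Q = cpos m 1 (int n + 1) 1 \<and> int n + 1 \<le> int n) \<or> (Q = cpos m 1 (int n - 1) 1 \<and> 1 + 3 \<le> int n)" for Q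
    by (rule bm_col) (use m n in auto)
  have B: "forced_mate m n n (cpos m 1 (int n - 1) 1)"
  proof -
    have "even (int n - 1 - 1)" using assms(3) by simp
    then show ?thesis using claimB[OF m n, of n] n by auto
  qed
  have "forced_mate m n (Suc n) \<lparr>wk = (int m, 1), wr = Some (1, 1), bk = (int m, int n)\<rparr>"
  proof (rule fm_step[OF w])
    show "cpos m 1 (int n - 1) 1 \<in> black_moves m n (cpos m 1 (int n) 1)"
      unfolding bm using n by auto
    fix Q assume "Q \<in> black_moves m n (cpos m 1 (int n) 1)"
    then have "Q = cpos m 1 (int n - 1) 1" using bm by auto
    then show "forced_mate m n n Q" using B by simp
  qed
  then show ?thesis by simp
qed

end
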